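(* For all positive integers $n,k$ and every $\boldsymbol\rho=(\rho_1,\dots,\rho_k)$ of integers with $1\le\rho_\ell\le n\le k$ for all $\ell\in[k]$ and $\sum_{\ell\in[k]}\rho_\ell=n^2$, there exists a $\boldsymbol\rho$-latin square of order $n$.
   Context: A $\boldsymbol\rho$-latin square of order $n$ is an $n\times n$ array in which every cell contains a symbol of $[k]$, each symbol occurs at most once in each row and at most once in each column, and each symbol $\ell$ occurs exactly $\rho_\ell$ times. *)

theory Defs
  imports Main
begin

definition rho_latin_square :: "nat \<Rightarrow> nat \<Rightarrow> (nat \<Rightarrow> nat) \<Rightarrow> (nat \<Rightarrow> nat \<Rightarrow> nat) \<Rightarrow> bool" where
  "rho_latin_square n k rho L \<longleftrightarrow>
     (\<forall>i<n. \<forall>j<n. L i j \<in> {1..k}) \<and>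
     (\<forall>i<n. \<forall>j<n. \<forall>j'<n. L i j = L i j' \<longrightarrow> j = j') \<and>
     (\<forall>j<n. \<forall>i<n. \<forall>i'<n. L i j = L i' j \<longrightarrow> i = i') \<and>
     (\<forall>l\<in>{1..k}. card {(i, j). i < n \<and> j < n \<and> L i j = l} = rho l)"

end

theory Submission
  imports Defs
begin

lemma block_lemma:
  fixes c :: "nat \<Rightarrow> nat"
  assumes "distinct xs" "p < q" "q < length (concat (map (\<lambda>x. replicate (c x) x) xs))"
    "concat (map (\<lambda>x. replicate (c x) x) xs) ! p = concat (map (\<lambda>x. replicate (c x) x) xs) ! q"
  shows "\<exists>a b. xs = a @ (concat (map (\<lambda>x. replicate (c x) x) xs) ! p) # b \<and>
     sum_list (map c a) \<le> p \<and> q < sum_list (map c a) + c (concat (map (\<lambda>x. replicate (c x) x) xs) ! p)"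
  using assms
proof (induction xs arbitrary: p q)
  case Nil
  then show ?case by simp
next
  case (Cons x xs)
  let ?ys = "concat (map (\<lambda>x. replicate (c x) x) xs)"
  have eq: "concat (map (\<lambda>x. replicate (c x) x) (x # xs)) = replicate (c x) x @ ?ys" by simp
  show ?case
  proof (cases "q < c x")
    case True
    then have "concat (map (\<lambda>x. replicate (c x) x) (x # xs)) ! p = x"
      using Cons.prems(2) by (simp add: nth_append)
    then show ?thesis using True by (intro exI[of _ "[]"] exI[of _ xs]) simp
  next
    case False
    show ?thesis
    proof (cases "p < c x")
      case True
      have ep: "concat (map (\<lambda>x. replicate (c x) x) (x # xs)) ! p = x"
        using True by (simp add: nth_append)
      have eq2: "concat (map (\<lambda>x. replicate (c x) x) (x # xs)) ! q = ?ys ! (q - c x)"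
        using False by (simp add: nth_append)
      have "q - c x < length ?ys" using Cons.prems(3) False by simp
      then have m: "?ys ! (q - c x) \<in> set ?ys" by (rule nth_mem)
      have "set ?ys \<subseteq> set xs" by auto
      with m have "?ys ! (q - c x) \<in> set xs" by blast
      with ep eq2 have False using Cons.prems(1,4) by auto
      then show ?thesis by simp
    next
      case pF: False
      have e1: "concat (map (\<lambda>x. replicate (c x) x) (x # xs)) ! p = ?ys ! (p - c x)"
        using pF by (simp add: nth_append)
      have e2: "concat (map (\<lambda>x. replicate (c x) x) (x # xs)) ! q = ?ys ! (q - c x)"
        using False by (simp add: nth_append)
      have "\<exists>a b. xs = a @ (?ys ! (p - c x)) # b \<and>
          sum_list (map c a) \<le> p - c x \<and> q - c x < sum_list (map c a) + c (?ys ! (p - c x))"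
        apply (rule Cons.IH)
        using Cons.prems pF False e1 e2 by auto
      then obtain a b where ab: "xs = a @ (?ys ! (p - c x)) # b"
          "sum_list (map c a) \<le> p - c x" "q - c x < sum_list (map c a) + c (?ys ! (p - c x))"
        by blast
      show ?thesis
        apply (rule exI[of _ "x # a"], rule exI[of _ b])
        using ab e1 pF False by auto
    qed
  qed
qed

lemma count_lemma:
  fixes c :: "nat \<Rightarrow> nat"
  assumes "distinct xs"
  shows "length (filter (\<lambda>y. y = l) (concat (map (\<lambda>x. replicate (c x) x) xs))) =
         (if l \<in> set xs then c l else 0)"
  using assms by (induction xs) (auto simp: filter_replicate)

definition rowp :: "nat \<Rightarrow> nat \<Rightarrow> nat" where "rowp n p = p mod n"
definition colp :: "nat \<Rightarrow> nat \<Rightarrow> nat" where "colp n p = (p mod n + p div n) mod n"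
definition posn :: "nat \<Rightarrow> nat \<Rightarrow> nat \<Rightarrow> nat" where "posn n i j = ((j + n - i) mod n) * n + i"

lemma pos_bound: "i < n \<Longrightarrow> j < n \<Longrightarrow> posn n i j < n * n"
proof -
  assume a: "i < n" "j < n"
  have "(j + n - i) mod n \<le> n - 1" using a by (simp add: less_Suc_eq_le[symmetric])
  then have "((j + n - i) mod n) * n \<le> (n - 1) * n" by simp
  moreover have "n + (n - 1) * n = n * n" using a by (cases n) auto
  ultimately show ?thesis using a unfolding posn_def by linarith
qed

lemma row_pos: "i < n \<Longrightarrow> j < n \<Longrightarrow> rowp n (posn n i j) = i"
  unfolding rowp_def posn_def by simp

lemma col_pos: "i < n \<Longrightarrow> j < n \<Longrightarrow> colp n (posn n i j) = j"
proof -
  assume a: "i < n" "j < n"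
  have "(posn n i j) div n = (j + n - i) mod n" unfolding posn_def using a by simp
  moreover have "posn n i j mod n = i" unfolding posn_def using a by simp
  ultimately have "colp n (posn n i j) = (i + (j + n - i) mod n) mod n" unfolding colp_def by simp
  also have "\<dots> = (i + (j + n - i)) mod n" by (simp add: mod_add_right_eq)
  also have "\<dots> = j" using a by simp
  finally show ?thesis .
qed

lemma pos_rowcol: "p < n * n \<Longrightarrow> posn n (rowp n p) (colp n p) = p"
proof -
  assume a: "p < n * n"
  then have n0: "n > 0" by (cases n) auto
  have d: "p div n < n" using a n0 by (simp add: div_less_iff_less_mult)
  have r: "p mod n < n" using n0 by simp
  have "(colp n p + n - rowp n p) mod n = p div n"
  proof -
    have "(colp n p + n - rowp n p) mod n = ((p mod n + p div n) mod n + n - p mod n) mod n"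
      unfolding colp_def rowp_def by simp
    also have "\<dots> = (p div n) mod n"
    proof -
      let ?r = "p mod n" and ?d = "p div n"
      have "int (((?r + ?d) mod n + n - ?r) mod n) = ((int ?r + int ?d) mod int n + int n - int ?r) mod int n"
        using r by (simp add: zmod_int of_nat_diff)
      also have "\<dots> = (int ?r + int ?d + int n - int ?r) mod int n"
        by (metis (no_types, opaque_lifting) add_diff_eq mod_add_left_eq mod_diff_left_eq)
      also have "\<dots> = int ?d mod int n"
        by (simp add: mod_add_self2)
      finally have "int (((?r + ?d) mod n + n - ?r) mod n) = int (?d mod n)" by (simp add: zmod_int)
      then show ?thesis by (simp only: of_nat_eq_iff)
    qed
    also have "\<dots> = p div n" using d by simp
    finally show ?thesis .
  qed
  then show ?thesis unfolding posn_def rowp_def by simp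
qed

lemma window:
  assumes "p < q" "q < n * n" "q - p + 2 \<le> n \<or> p div n = q div n"
  shows "rowp n p \<noteq> rowp n q \<and> colp n p \<noteq> colp n q"
proof -
  have n0: "n > 0" using assms by (cases n) auto
  define d1 where "d1 = p div n"
  define r1 where "r1 = p mod n"
  define d2 where "d2 = q div n"
  define r2 where "r2 = q mod n"
  have p: "p = d1 * n + r1" and q: "q = d2 * n + r2" unfolding d1_def r1_def d2_def r2_def by simp_all
  have r1n: "r1 < n" and r2n: "r2 < n" unfolding r1_def r2_def using n0 by simp_all
  have rp: "rowp n p = r1" "rowp n q = r2" unfolding rowp_def r1_def r2_def by simp_all
  have cp: "colp n p = (r1 + d1) mod n" "colp n q = (r2 + d2) mod n"
    unfolding colp_def r1_def r2_def d1_def d2_def by simp_all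
  show ?thesis
  proof (cases "d1 = d2")
    case True
    then have "r1 \<noteq> r2" using p q assms(1) by auto
    moreover have "(r1 + d1) mod n \<noteq> (r2 + d1) mod n"
    proof
      assume "(r1 + d1) mod n = (r2 + d1) mod n"
      then have "int (r1 + d1) mod int n = int (r2 + d1) mod int n" by (simp only: zmod_int[symmetric])
      then have "int n dvd int (r1 + d1) - int (r2 + d1)" by (simp add: mod_eq_dvd_iff)
      then have dv: "int n dvd int r1 - int r2" by simp
      have "int r1 - int r2 \<noteq> 0" using \<open>r1 \<noteq> r2\<close> by simp
      then have "int n \<le> \<bar>int r1 - int r2\<bar>" using dvd_imp_le_int[OF _ dv] by simp
      then show False using r1n r2n by linarith
    qed
    ultimately show ?thesis using rp cp True by simp
  next
    case False
    then have w: "q - p + 2 \<le> n" using assms(3) d1_def d2_def by auto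
    have "d1 \<le> d2" unfolding d1_def d2_def using assms(1) by (simp add: div_le_mono)
    then have lt: "d1 < d2" using False by simp
    have "d2 * n < (d1 + 2) * n" using p q w r1n by (simp add: algebra_simps)
    then have "d2 < d1 + 2" by (metis mult_less_cancel2)
    then have d2: "d2 = d1 + 1" using lt by simp
    then have rr: "r2 + 2 \<le> r1" using p q w assms(1) by (simp add: algebra_simps)
    have "rowp n p \<noteq> rowp n q" using rp rr by simp
    moreover have "(r1 + d1) mod n \<noteq> (r2 + d2) mod n"
    proof
      assume "(r1 + d1) mod n = (r2 + d2) mod n"
      then have "int (r1 + d1) mod int n = int (r2 + d2) mod int n" by (simp only: zmod_int[symmetric])
      then have "int n dvd int (r1 + d1) - int (r2 + d2)" by (simp add: mod_eq_dvd_iff)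
      then have dv: "int n dvd int r1 - int r2 - 1" using d2 by (simp add: algebra_simps)
      have "int r1 - int r2 - 1 > 0" using rr by simp
      then have "int n \<le> int r1 - int r2 - 1" using dv zdvd_imp_le by blast
      then show False using r1n by simp
    qed
    ultimately show ?thesis using rp cp by simp
  qed
qed


lemma sum_const_list: "\<forall>x\<in>set a. c x = (n::nat) \<Longrightarrow> sum_list (map c a) = length a * n"
  by (induction a) auto

theorem theorem2p2:
  fixes n k :: nat and rho :: "nat \<Rightarrow> int"
  assumes "n > 0" and "k > 0"
    and "\<forall>l\<in>{1..k}. 1 \<le> rho l \<and> rho l \<le> int n"
    and "n \<le> k"
    and "(\<Sum>l\<in>{1..k}. rho l) = int n ^ 2"
  shows "\<exists>L. rho_latin_square n k (\<lambda>l. nat (rho l)) L"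
proof -
  define c where "c = (\<lambda>l. nat (rho l))"
  define Fl where "Fl = filter (\<lambda>l. c l = n) [1..<Suc k]"
  define Rl where "Rl = filter (\<lambda>l. c l \<noteq> n) [1..<Suc k]"
  define xs where "xs = Fl @ Rl"
  define ys where "ys = concat (map (\<lambda>x. replicate (c x) x) xs)"
  define L where "L = (\<lambda>i j. ys ! posn n i j)"
  have dist: "distinct xs" unfolding xs_def Fl_def Rl_def by auto
  have setxs: "set xs = {1..k}" unfolding xs_def Fl_def Rl_def by auto
  have cle: "\<And>l. l \<in> {1..k} \<Longrightarrow> c l \<le> n" unfolding c_def using assms(3) by fastforce
  have ci: "\<And>l. l \<in> {1..k} \<Longrightarrow> int (c l) = rho l" unfolding c_def using assms(3) by fastforce
  have "length ys = sum_list (map c xs)" unfolding ys_def by (simp add: length_concat o_def)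
  also have "\<dots> = sum c {1..k}" using dist setxs by (simp add: sum_list_distinct_conv_sum_set)
  finally have len0: "length ys = sum c {1..k}" .
  have "int (sum c {1..k}) = (\<Sum>l\<in>{1..k}. rho l)" by (simp add: ci)
  then have "int (length ys) = int (n * n)" using len0 assms(5) by (simp add: power2_eq_square)
  then have len: "length ys = n * n" by (simp only: of_nat_eq_iff)
  have setys: "set ys \<subseteq> {1..k}" unfolding ys_def using setxs by auto
  have key: "rowp n p \<noteq> rowp n q \<and> colp n p \<noteq> colp n q"
    if pq: "p < q" "q < n * n" "ys ! p = ys ! q" for p q
  proof -
    obtain a b where ab: "xs = a @ (ys ! p) # b" "sum_list (map c a) \<le> p"
        "q < sum_list (map c a) + c (ys ! p)"
      using block_lemma[where c=c, OF dist pq(1)] pq len unfolding ys_def by (simp, blast)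
    have "p < length ys" using pq len by simp
    then have yk: "ys ! p \<in> {1..k}" using setys nth_mem by blast
    show ?thesis
    proof (cases "c (ys ! p) = n")
      case True
      have inF: "ys ! p \<in> set Fl" using True yk unfolding Fl_def by (simp del: upt_Suc)
      have nR: "ys ! p \<notin> set Rl" using True unfolding Rl_def by auto
      have "a @ (ys ! p) # b = Fl @ Rl" using ab(1) xs_def by simp
      then obtain us where "a = Fl @ us \<and> us @ (ys ! p) # b = Rl \<or> a @ us = Fl \<and> (ys ! p) # b = us @ Rl"
        by (auto simp: append_eq_append_conv2)
      then have "set a \<subseteq> set Fl" using nR by (metis Un_iff in_set_conv_decomp set_append subsetI)
      then have "\<forall>x\<in>set a. c x = n" unfolding Fl_def by auto
      then have S: "sum_list (map c a) = length a * n" by (rule sum_const_list)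
      have "p div n = length a" using ab(2,3) S True pq
        by (intro div_nat_eqI) (auto simp: algebra_simps)
      moreover have "q div n = length a" using ab(2,3) S True pq
        by (intro div_nat_eqI) (auto simp: algebra_simps)
      ultimately show ?thesis using window[OF pq(1,2)] by simp
    next
      case False
      then have "c (ys ! p) + 1 \<le> n" using cle[OF yk] by simp
      then have "q - p + 2 \<le> n" using ab(2,3) pq(1) by linarith
      then show ?thesis using window[OF pq(1,2)] by simp
    qed
  qed
  have key2: "rowp n p \<noteq> rowp n q \<and> colp n p \<noteq> colp n q"
    if pq: "p \<noteq> q" "p < n * n" "q < n * n" "ys ! p = ys ! q" for p q
  proof (cases "p < q")
    case True then show ?thesis using key pq by blast
  next
    case False then have "q < p" using pq by simp
    then show ?thesis using key[of q p] pq by auto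
  qed
  have bij: "bij_betw (\<lambda>(i, j). posn n i j) {(i, j). i < n \<and> j < n \<and> L i j = l}
               {p. p < length ys \<and> ys ! p = l}" for l
  proof (rule bij_betw_imageI)
    show "inj_on (\<lambda>(i, j). posn n i j) {(i, j). i < n \<and> j < n \<and> L i j = l}"
      by (rule inj_onI) (auto, metis row_pos, metis col_pos)
    show "(\<lambda>(i, j). posn n i j) ` {(i, j). i < n \<and> j < n \<and> L i j = l} = {p. p < length ys \<and> ys ! p = l}"
    proof (intro equalityI subsetI)
      fix p assume "p \<in> (\<lambda>(i, j). posn n i j) ` {(i, j). i < n \<and> j < n \<and> L i j = l}"
      then show "p \<in> {p. p < length ys \<and> ys ! p = l}" using pos_bound len unfolding L_def by auto
    next
      fix p assume p: "p \<in> {p. p < length ys \<and> ys ! p = l}"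
      have n0: "n > 0" using assms(1) .
      have "rowp n p < n" "colp n p < n" unfolding rowp_def colp_def using n0 by auto
      moreover have "posn n (rowp n p) (colp n p) = p" using p len pos_rowcol by auto
      ultimately show "p \<in> (\<lambda>(i, j). posn n i j) ` {(i, j). i < n \<and> j < n \<and> L i j = l}"
        using p unfolding L_def by (intro image_eqI[of _ _ "(rowp n p, colp n p)"]) auto
    qed
  qed
  have "rho_latin_square n k c L"
    unfolding rho_latin_square_def
  proof (intro conjI allI impI ballI)
    fix i j assume ij: "i < n" "j < n"
    then have "posn n i j < length ys" using pos_bound len by simp
    then show "L i j \<in> {1..k}" unfolding L_def using setys nth_mem by blast
  next
    fix i j j' assume ij: "i < n" "j < n" "j' < n" "L i j = L i j'"
    show "j = j'"
    proof (rule ccontr)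
      assume ne: "j \<noteq> j'"
      have "posn n i j \<noteq> posn n i j'" using ne col_pos ij by metis
      then show False using key2[of "posn n i j" "posn n i j'"] ij pos_bound row_pos
        unfolding L_def by auto
    qed
  next
    fix i j i' assume ij: "j < n" "i < n" "i' < n" "L i j = L i' j"
    show "i = i'"
    proof (rule ccontr)
      assume ne: "i \<noteq> i'"
      have "posn n i j \<noteq> posn n i' j" using ne row_pos ij by metis
      then show False using key2[of "posn n i j" "posn n i' j"] ij pos_bound col_pos
        unfolding L_def by auto
    qed
  next
    fix l assume l: "l \<in> {1..k}"
    have "card {(i, j). i < n \<and> j < n \<and> L i j = l} = card {p. p < length ys \<and> ys ! p = l}"
      using bij bij_betw_same_card by blast
    also have "\<dots> = length (filter (\<lambda>y. y = l) ys)" by (simp add: length_filter_conv_card)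
    also have "\<dots> = c l" unfolding ys_def using count_lemma[OF dist] setxs l by simp
    finally show "card {(i, j). i < n \<and> j < n \<and> L i j = l} = c l" .
  qed
  then show ?thesis unfolding c_def by blast
qed

end
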